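(* Let $M\in\mathbb{C}^{d\times d}$ and $w\in\mathbb{C}^d$, and assume $M+we_d^T$ is diagonalizable, $M+we_d^T=X\Lambda X^{-1}$ with $\Lambda=\mathrm{diag}(\lambda_1,\dots,\lambda_d)$. Let $f$ be analytic on an open set containing the eigenvalues of $M$ and of $M+we_d^T$. Then $$f(M+we_d^T)e_1-f(M)e_1=g_w(M)\,w,$$ where $g_w$ is the function defined in the context.
   Context: $e_j$ is the $j$th column of the identity. Divided difference: $f[t,\lambda]=f'(t)$ if $t=\lambda$, and $f[t,\lambda]=\frac{f(t)-f(\lambda)}{t-\lambda}$ otherwise. With $X$ from the eigendecomposition $M+we_d^T=X\Lambda X^{-1}$, set $\alpha_i=e_d^TXe_i$, $\beta_i=e_i^TX^{-1}e_1$, and $g_w(t)=\sum_{i=1}^d\alpha_i\beta_i f[t,\lambda_i]$; $g_w(M)=\sum_{i=1}^d\alpha_i\beta_i f[M,\lambda_i]$, where $f[M,\lambda_i]$ denotes the matrix function of $M$ associated with the analytic function $z\mapsto f[z,\lambda_i]$. *)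

theory Defs
  imports "HOL-Analysis.Analysis" "Jordan_Normal_Form.Jordan_Normal_Form"
begin

definition mat_poly :: "complex poly \<Rightarrow> complex mat \<Rightarrow> complex mat" where
  "mat_poly p A = mat (dim_row A) (dim_col A)
     (\<lambda>(r, c). \<Sum>i\<le>degree p. coeff p i * (A ^\<^sub>m i) $$ (r, c))"

(* primary matrix function f(A) (Higham, Def. 1.4 / Hermite interpolation):
   f(A) = p(A) for any polynomial p interpolating f and its derivatives at
   every eigenvalue z of A up to the multiplicity of z as root of the
   characteristic polynomial. *)
definition mat_fun :: "(complex \<Rightarrow> complex) \<Rightarrow> complex mat \<Rightarrow> complex mat" where
  "mat_fun f A = (THE B. \<exists>p. (\<forall>z. poly (char_poly A) z = 0 \<longrightarrow>
        (\<forall>j < order z (char_poly A). (deriv ^^ j) (poly p) z = (deriv ^^ j) f z))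
      \<and> B = mat_poly p A)"

definition divdiff :: "(complex \<Rightarrow> complex) \<Rightarrow> complex \<Rightarrow> complex \<Rightarrow> complex" where
  "divdiff f t lam = (if t = lam then deriv f t else (f t - f lam) / (t - lam))"

(* the rank-one matrix w e_d^T (d x d, indices 0..d-1, so e_d = unit_vec d (d-1)) *)
definition rank1_last :: "nat \<Rightarrow> complex vec \<Rightarrow> complex mat" where
  "rank1_last d w = mat d d (\<lambda>(i, j). w $ i * (if j = d - 1 then 1 else 0))"

(* g_w(M) = sum_i alpha_i beta_i f[M, lam_i],
   alpha_i = e_d^T X e_i, beta_i = e_i^T X^{-1} e_1 *)
definition g_w_mat :: "(complex \<Rightarrow> complex) \<Rightarrow> nat \<Rightarrow> complex mat \<Rightarrow> complex mat
    \<Rightarrow> (nat \<Rightarrow> complex) \<Rightarrow> complex mat \<Rightarrow> complex mat" where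
  "g_w_mat f d X Xinv lam M = mat d d (\<lambda>(r, c).
      \<Sum>i<d. X $$ (d - 1, i) * Xinv $$ (i, 0) * mat_fun (\<lambda>z. divdiff f z (lam i)) M $$ (r, c))"

end

theory Submission imports Defs "HOL-Complex_Analysis.Complex_Analysis" "HOL-Computational_Algebra.Polynomial_Factorial" "Jordan_Normal_Form.Schur_Decomposition" "HOL-Computational_Algebra.Field_as_Ring" "HOL-Computational_Algebra.Euclidean_Algorithm" begin

lemma pow_mat_Suc_left:
  assumes A: "(A :: 'a::semiring_1 mat) \<in> carrier_mat n n"
  shows "A ^\<^sub>m Suc k = A * A ^\<^sub>m k"
proof (induct k)
  case 0 then show ?case using A by simp
next
  case (Suc k)
  have "A ^\<^sub>m Suc (Suc k) = (A * A ^\<^sub>m k) * A" using Suc by simp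
  also have "\<dots> = A * (A ^\<^sub>m k * A)" using A by (simp add: assoc_mult_mat[of _ n n _ n _ n])
  finally show ?case by simp
qed

lemma mat_poly_carrier[simp]: "A \<in> carrier_mat n n \<Longrightarrow> mat_poly p A \<in> carrier_mat n n"
  unfolding mat_poly_def by auto

lemma dim_mat_poly[simp]: "dim_row (mat_poly p A) = dim_row A" "dim_col (mat_poly p A) = dim_col A"
  unfolding mat_poly_def by auto

lemma mat_poly_sum:
  assumes A: "A \<in> carrier_mat n n" and N: "degree p \<le> N"
  shows "mat_poly p A = mat n n (\<lambda>(r, c). \<Sum>i\<le>N. coeff p i * (A ^\<^sub>m i) $$ (r, c))"
proof -
  have "(\<Sum>i\<le>degree p. coeff p i * (A ^\<^sub>m i) $$ (r, c)) = (\<Sum>i\<le>N. coeff p i * (A ^\<^sub>m i) $$ (r, c))" for r c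
    by (rule sum.mono_neutral_left) (use N in \<open>auto intro!: coeff_eq_0\<close>)
  then show ?thesis using A unfolding mat_poly_def by auto
qed

lemma mat_poly_0[simp]: "A \<in> carrier_mat n n \<Longrightarrow> mat_poly 0 A = 0\<^sub>m n n"
  unfolding mat_poly_def by auto

lemma mat_poly_pCons:
  assumes A: "A \<in> carrier_mat n n"
  shows "mat_poly (pCons a p) A = a \<cdot>\<^sub>m 1\<^sub>m n + A * mat_poly p A"
proof -
  have d: "degree (pCons a p) \<le> Suc (degree p)" by (simp add: degree_pCons_le)
  have dims: "dim_row A = n" "dim_col A = n" "dim_row (mat_poly p A) = n" "dim_col (mat_poly p A) = n"
    using A mat_poly_carrier[OF A, of p] by auto
  show ?thesis
  proof (rule eq_matI)
    fix r c assume r: "r < dim_row (a \<cdot>\<^sub>m 1\<^sub>m n + A * mat_poly p A)" and c: "c < dim_col (a \<cdot>\<^sub>m 1\<^sub>m n + A * mat_poly p A)"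
    hence r: "r < n" and c: "c < n" using A mat_poly_carrier[OF A, of p] by auto
    have "mat_poly (pCons a p) A $$ (r,c) = (\<Sum>i\<le>Suc (degree p). coeff (pCons a p) i * (A ^\<^sub>m i) $$ (r, c))"
      using mat_poly_sum[OF A d] r c by simp
    also have "\<dots> = a * (1\<^sub>m n) $$ (r,c) + (\<Sum>i\<le>degree p. coeff p i * (A ^\<^sub>m Suc i) $$ (r, c))"
      by (subst sum.atMost_Suc_shift) (use A in simp)
    also have "(\<Sum>i\<le>degree p. coeff p i * (A ^\<^sub>m Suc i) $$ (r, c))
        = (\<Sum>i\<le>degree p. coeff p i * (\<Sum>k<n. A $$ (r,k) * (A ^\<^sub>m i) $$ (k, c)))"
      using A r c by (simp only: pow_mat_Suc_left[OF A]) (simp add: scalar_prod_def lessThan_atLeast0)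
    also have "\<dots> = (\<Sum>k<n. A $$ (r,k) * (\<Sum>i\<le>degree p. coeff p i * (A ^\<^sub>m i) $$ (k, c)))"
      by (simp add: sum_distrib_left sum_distrib_right algebra_simps) (rule sum.swap)
    also have "\<dots> = (A * mat_poly p A) $$ (r,c)"
      using A r c by (simp add: mat_poly_def scalar_prod_def lessThan_atLeast0)
    finally show "mat_poly (pCons a p) A $$ (r,c) = (a \<cdot>\<^sub>m 1\<^sub>m n + A * mat_poly p A) $$ (r,c)"
      using A r c mat_poly_carrier[OF A, of p] by (simp add: dims)
  qed (use A in auto)
qed

lemma smult_zero_one_mat[simp]: "(0::'a::semiring_1) \<cdot>\<^sub>m 1\<^sub>m n = 0\<^sub>m n n"
  by (rule eq_matI) auto

lemma mat_poly_add:
  assumes A: "A \<in> carrier_mat n n"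
  shows "mat_poly (p + q) A = mat_poly p A + mat_poly q A"
proof -
  let ?N = "max (degree p) (degree q)"
  have 1: "mat_poly (p+q) A = mat n n (\<lambda>(r, c). \<Sum>i\<le>?N. coeff (p+q) i * (A ^\<^sub>m i) $$ (r, c))"
    by (rule mat_poly_sum[OF A]) (simp add: degree_add_le)
  have 2: "mat_poly p A = mat n n (\<lambda>(r, c). \<Sum>i\<le>?N. coeff p i * (A ^\<^sub>m i) $$ (r, c))"
    by (rule mat_poly_sum[OF A]) simp
  have 3: "mat_poly q A = mat n n (\<lambda>(r, c). \<Sum>i\<le>?N. coeff q i * (A ^\<^sub>m i) $$ (r, c))"
    by (rule mat_poly_sum[OF A]) simp
  show ?thesis unfolding 1 2 3
    by (rule eq_matI) (auto simp: distrib_right sum.distrib)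
qed

lemma mat_poly_smult:
  assumes A: "A \<in> carrier_mat n n"
  shows "mat_poly (Polynomial.smult a p) A = a \<cdot>\<^sub>m mat_poly p A"
proof -
  have 1: "mat_poly (Polynomial.smult a p) A = mat n n (\<lambda>(r, c). \<Sum>i\<le>degree p. coeff (Polynomial.smult a p) i * (A ^\<^sub>m i) $$ (r, c))"
    by (rule mat_poly_sum[OF A]) simp
  have 2: "mat_poly p A = mat n n (\<lambda>(r, c). \<Sum>i\<le>degree p. coeff p i * (A ^\<^sub>m i) $$ (r, c))"
    by (rule mat_poly_sum[OF A]) simp
  show ?thesis unfolding 1 2
    by (rule eq_matI) (auto simp: sum_distrib_left mult.assoc)
qed

lemma mat_poly_mult:
  assumes A: "A \<in> carrier_mat n n"
  shows "mat_poly (p * q) A = mat_poly p A * mat_poly q A"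
proof (induct p)
  case 0
  then show ?case using A by simp
next
  case (pCons a p)
  have Q: "mat_poly q A \<in> carrier_mat n n" "mat_poly p A \<in> carrier_mat n n" using A by auto
  have "mat_poly (pCons a p * q) A = mat_poly (Polynomial.smult a q + pCons 0 (p * q)) A"
    by simp
  also have "\<dots> = a \<cdot>\<^sub>m mat_poly q A + (0 \<cdot>\<^sub>m 1\<^sub>m n + A * (mat_poly p A * mat_poly q A))"
    by (simp add: mat_poly_add[OF A] mat_poly_smult[OF A] mat_poly_pCons[OF A] pCons)
  also have "\<dots> = a \<cdot>\<^sub>m mat_poly q A + A * (mat_poly p A * mat_poly q A)"
    using A Q by (simp only: smult_zero_one_mat) (subst left_add_zero_mat[of _ n n], auto)
  also have "\<dots> = (a \<cdot>\<^sub>m 1\<^sub>m n + A * mat_poly p A) * mat_poly q A"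
    using A Q by (simp add: add_mult_distrib_mat[of "a \<cdot>\<^sub>m 1\<^sub>m n" n n "A * mat_poly p A" "mat_poly q A" n]
       mult_smult_assoc_mat[of "1\<^sub>m n" n n "mat_poly q A" n] assoc_mult_mat[of A n n "mat_poly p A" n "mat_poly q A" n])
  finally show ?case by (simp add: mat_poly_pCons[OF A])
qed

lemma mat_poly_intertwine:
  assumes A: "A \<in> carrier_mat n n" and B: "B \<in> carrier_mat n n" and X: "X \<in> carrier_mat n n"
    and AX: "A * X = X * B"
  shows "mat_poly p A * X = X * mat_poly p B"
proof (induct p)
  case 0
  then show ?case using A B X by simp
next
  case (pCons a p)
  have Q: "mat_poly p A \<in> carrier_mat n n" "mat_poly p B \<in> carrier_mat n n" using A B by auto
  have "mat_poly (pCons a p) A * X = (a \<cdot>\<^sub>m 1\<^sub>m n + A * mat_poly p A) * X"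
    by (simp add: mat_poly_pCons[OF A])
  also have "\<dots> = a \<cdot>\<^sub>m X + A * (mat_poly p A * X)"
    using A Q X by (simp add: add_mult_distrib_mat[of _ n n] mult_smult_assoc_mat[of _ n n]
        assoc_mult_mat[of A n n "mat_poly p A" n X n])
  also have "\<dots> = a \<cdot>\<^sub>m X + (A * X) * mat_poly p B"
    using A Q X pCons by simp
  also have "\<dots> = a \<cdot>\<^sub>m X + X * (B * mat_poly p B)"
    using A B Q X AX by (simp add: assoc_mult_mat[of X n n B n "mat_poly p B" n])
  also have "\<dots> = X * (a \<cdot>\<^sub>m 1\<^sub>m n + B * mat_poly p B)"
    using B Q X by (simp add: mult_add_distrib_mat[of X n n "a \<cdot>\<^sub>m 1\<^sub>m n" n "B * mat_poly p B"]
        mult_smult_distrib[of X n n "1\<^sub>m n" n])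
  finally show ?case by (simp add: mat_poly_pCons[OF B])
qed

lemma sumdelta2: "j < (n::nat) \<Longrightarrow> c = a j * b j \<Longrightarrow>
  (\<Sum>k = 0..<n. (if j = k then a k else 0) * (if k = j then b k else (0::'a::semiring_0))) = c"
proof -
  assume j: "j < n" and c: "c = a j * b j"
  have "(\<Sum>k = 0..<n. (if j = k then a k else 0) * (if k = j then b k else (0::'a))) = (\<Sum>k \<in> {0..<n}. if k = j then a j * b j else 0)"
    by (rule sum.cong) auto
  also have "\<dots> = a j * b j" using j by simp
  finally show ?thesis using c by simp
qed

lemma mat_poly_diag:
  shows "mat_poly p (mat n n (\<lambda>(i, j). if i = j then lam i else 0))
      = mat n n (\<lambda>(i, j). if i = j then poly p (lam i) else 0)"
proof (induct p)
  case 0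
  then show ?case by (rule eq_matI) (auto simp: mat_poly_def)
next
  case (pCons a p)
  let ?D = "mat n n (\<lambda>(i, j). if i = j then lam i else 0)"
  have D: "?D \<in> carrier_mat n n" by simp
  show ?case unfolding mat_poly_pCons[OF D] pCons
    by (rule eq_matI) (auto simp: scalar_prod_def intro!: sum.neutral sumdelta2)
qed

lemma mat_poly_lin_index:
  assumes B: "B \<in> carrier_mat n n" and r: "r < n" and c: "c < n"
  shows "mat_poly [:a, 1:] B $$ (r, c) = (if r = c then a else 0) + B $$ (r, c)"
proof -
  have "B ^\<^sub>m 1 = B" using B by simp
  then show ?thesis using B r c unfolding mat_poly_def by (simp add: atMost_Suc)
qed

lemma upper_tri_CH:
  assumes B: "B \<in> carrier_mat n n" and ut: "upper_triangular B"
  shows "mat_poly (\<Prod>i<n. [:- B $$ (i,i), 1:]) B = 0\<^sub>m n n"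
proof -
  have main: "k \<le> n \<Longrightarrow> r < n \<Longrightarrow> c < k \<Longrightarrow> mat_poly (\<Prod>i<k. [:- B $$ (i,i), 1:]) B $$ (r,c) = 0" for k r c
  proof (induct k arbitrary: r c)
    case 0 then show ?case by simp
  next
    case (Suc k)
    let ?P = "mat_poly (\<Prod>i<k. [:- B $$ (i,i), 1:]) B"
    let ?L = "mat_poly [:- B $$ (k,k), 1:] B"
    have PC: "?P \<in> carrier_mat n n" "?L \<in> carrier_mat n n" using B by auto
    have "mat_poly (\<Prod>i<Suc k. [:- B $$ (i,i), 1:]) B = ?P * ?L"
      by (simp only: prod.lessThan_Suc mat_poly_mult[OF B])
    also have "\<dots> $$ (r,c) = (\<Sum>j<n. ?P $$ (r,j) * ?L $$ (j,c))"
      using PC Suc.prems by (simp add: scalar_prod_def lessThan_atLeast0 carrier_matD[OF B])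
    also have "\<dots> = 0"
    proof (rule sum.neutral, rule ballI)
      fix j assume j: "j \<in> {..<n}"
      show "?P $$ (r,j) * ?L $$ (j,c) = 0"
      proof (cases "j < k")
        case True then show ?thesis using Suc j by simp
      next
        case False
        have "?L $$ (j,c) = 0"
        proof (cases "c < j")
          case True
          then show ?thesis using mat_poly_lin_index[OF B] j Suc.prems ut B by auto
        next
          case False
          then have "j = k" "c = k" using \<open>\<not> j < k\<close> Suc.prems by auto
          then show ?thesis using mat_poly_lin_index[OF B] j by simp
        qed
        then show ?thesis by simp
      qed
    qed
    finally show ?case .
  qed
  show ?thesis
    by (rule eq_matI) (use B main[of n] in auto)
qed

lemma cayley_hamilton:
  fixes A :: "complex mat"
  assumes A: "A \<in> carrier_mat n n"
  shows "mat_poly (char_poly A) A = 0\<^sub>m n n"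
proof -
  obtain es where es: "char_poly A = (\<Prod>a\<leftarrow>es. [:- a, 1:])" using char_poly_factorized[OF A] by blast
  define B where "B = schur_upper_triangular A es"
  have B: "B \<in> carrier_mat n n" "upper_triangular B" "similar_mat A B"
    using schur_upper_triangular[OF A es] unfolding B_def by auto
  have "char_poly A = char_poly B" by (rule char_poly_similar[OF B(3)])
  also have "\<dots> = (\<Prod>a\<leftarrow>diag_mat B. [:- a, 1:])" by (rule char_poly_upper_triangular[OF B(1,2)])
  also have "\<dots> = (\<Prod>i<n. [:- B $$ (i,i), 1:])"
    using B(1) unfolding diag_mat_def
    by (simp add: prod.distinct_set_conv_list[symmetric] o_def lessThan_atLeast0)
  finally have cp: "char_poly A = (\<Prod>i<n. [:- B $$ (i,i), 1:])" .
  from similar_matD[OF B(3)] obtain m P Q where PQ: "{A, B, P, Q} \<subseteq> carrier_mat m m"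
    "P * Q = 1\<^sub>m m" "Q * P = 1\<^sub>m m" "A = P * B * Q" by blast
  have m: "m = n" using PQ A by auto
  have P: "P \<in> carrier_mat n n" and Q: "Q \<in> carrier_mat n n" using PQ m by auto
  have AP: "A * P = P * B"
  proof -
    have "A * P = (P * B) * (Q * P)" unfolding PQ(4) by (rule assoc_mult_mat[of "P*B" n n Q n P n]) (use P Q B(1) in auto)
    also have "\<dots> = P * B" using PQ P B by (simp add: m)
    finally show ?thesis .
  qed
  have Z: "mat_poly (char_poly A) B = 0\<^sub>m n n" unfolding cp by (rule upper_tri_CH[OF B(1,2)])
  have "mat_poly (char_poly A) A = mat_poly (char_poly A) A * (P * Q)"
    using PQ(2) A by (simp add: m carrier_matD[OF A])
  also have "\<dots> = (mat_poly (char_poly A) A * P) * Q"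
    by (rule assoc_mult_mat[symmetric, of _ n n _ n _ n]) (use A P Q in auto)
  also have "\<dots> = P * mat_poly (char_poly A) B * Q"
    by (simp add: mat_poly_intertwine[OF A B(1) P AP])
  also have "\<dots> = 0\<^sub>m n n" using P Q Z by simp
  finally show ?thesis .
qed

lemma deriv_poly_eq: "deriv (poly p) = poly (pderiv p)"
  by (rule ext, rule DERIV_imp_deriv, rule poly_DERIV)

lemma higher_deriv_poly: "(deriv ^^ j) (poly p) = poly ((pderiv ^^ j) p)"
  by (induct j) (simp_all add: deriv_poly_eq)

lemma pderiv_funpow_0[simp]: "(pderiv ^^ j) 0 = 0"
  by (induct j) (simp_all add: pderiv_0)

lemma pderiv_funpow_add: "(pderiv ^^ j) (p + q) = (pderiv ^^ j) p + (pderiv ^^ j) q"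
  by (induct j) (simp_all add: pderiv_add)

lemma pderiv_funpow_diff: "(pderiv ^^ j) (p - q) = (pderiv ^^ j) p - (pderiv ^^ j) (q :: complex poly)"
  by (induct j) (simp_all add: pderiv_diff)

lemma vanish_imp_order:
  fixes r :: "complex poly"
  assumes "r \<noteq> 0" "\<forall>j<m. poly ((pderiv ^^ j) r) z = 0"
  shows "m \<le> Polynomial.order z r"
  using assms
proof (induct m arbitrary: r)
  case 0 then show ?case by simp
next
  case (Suc m)
  have r0: "poly r z = 0" using Suc.prems(2) by (metis funpow_0 zero_less_Suc)
  have ord: "Polynomial.order z r = Suc (Polynomial.order z (pderiv r))" by (rule order_pderiv[OF Suc.prems(1) r0])
  show ?case
  proof (cases "pderiv r = 0")
    case True
    then obtain h where "r = [:h:]" using pderiv_iszero by blast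
    then show ?thesis using r0 Suc.prems(1) by simp
  next
    case False
    have "\<forall>j<m. poly ((pderiv ^^ j) (pderiv r)) z = 0"
    proof (intro allI impI)
      fix j assume "j < m"
      then have "Suc j < Suc m" by simp
      then have "poly ((pderiv ^^ Suc j) r) z = 0" using Suc.prems(2) by blast
      then show "poly ((pderiv ^^ j) (pderiv r)) z = 0" by (simp add: funpow_Suc_right del: funpow.simps)
    qed
    from Suc.hyps[OF False this] ord show ?thesis by simp
  qed
qed

lemma order_imp_vanish:
  fixes r :: "complex poly"
  assumes "r = 0 \<or> m \<le> Polynomial.order z r" "j < m"
  shows "poly ((pderiv ^^ j) r) z = 0"
  using assms
proof (induct j arbitrary: r m)
  case 0
  then show ?case by (metis funpow_0 order_root not_gr_zero poly_0 leD)
next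
  case (Suc j)
  show ?case
  proof (cases "r = 0 \<or> pderiv r = 0")
    case True
    then show ?thesis by (auto simp: funpow_Suc_right pderiv_0 simp del: funpow.simps)
  next
    case False
    then have r: "r \<noteq> 0" and pr: "pderiv r \<noteq> 0" by auto
    have mo: "m \<le> Polynomial.order z r" using Suc.prems r by auto
    have r0: "poly r z = 0" using mo Suc.prems(2) r by (metis order_root not_less0 le_0_eq less_Suc_eq_0_disj)
    have ord: "Polynomial.order z r = Suc (Polynomial.order z (pderiv r))" by (rule order_pderiv[OF r r0])
    have "poly ((pderiv ^^ j) (pderiv r)) z = 0"
      by (rule Suc.hyps[of "pderiv r" "m - 1"]) (use mo ord Suc.prems(2) in auto)
    then show ?thesis by (simp add: funpow_Suc_right del: funpow.simps)
  qed
qed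

lemma dvd_imp_vanish:
  fixes r :: "complex poly"
  assumes "[:-z, 1:] ^ m dvd r" "j < m"
  shows "poly ((pderiv ^^ j) r) z = 0"
  using order_imp_vanish assms order_divides by blast

lemma coeff_pderiv_funpow:
  "of_nat (fact n) * coeff ((pderiv ^^ j) P) n = of_nat (fact (n + j)) * coeff (P :: complex poly) (n + j)"
proof (induct j arbitrary: P n)
  case 0 then show ?case by simp
next
  case (Suc j)
  have "of_nat (fact n) * coeff ((pderiv ^^ Suc j) P) n = of_nat (fact n) * coeff ((pderiv ^^ j) (pderiv P)) n"
    by (simp add: funpow_Suc_right del: funpow.simps)
  also have "\<dots> = of_nat (fact (n + j)) * coeff (pderiv P) (n + j)" by (rule Suc)
  also have "\<dots> = of_nat (fact (n + Suc j)) * coeff P (n + Suc j)"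
    by (simp add: coeff_pderiv algebra_simps)
  finally show ?case .
qed

lemma pderiv_funpow_pcompose_lin:
  "(pderiv ^^ j) (pcompose P [:-z, 1:]) = pcompose ((pderiv ^^ j) P) [:-z, 1:]"
  by (induct j) (simp_all add: pderiv_pcompose pderiv_pCons)

definition taylor_poly :: "(nat \<Rightarrow> complex) \<Rightarrow> complex \<Rightarrow> nat \<Rightarrow> complex poly" where
  "taylor_poly F z m = pcompose (\<Sum>k<m. monom (F k / of_nat (fact k)) k) [:-z, 1:]"

lemma taylor_poly_deriv:
  assumes "j < m"
  shows "poly ((pderiv ^^ j) (taylor_poly F z m)) z = F j"
proof -
  let ?P = "\<Sum>k<m. monom (F k / of_nat (fact k)) k"
  have "poly ((pderiv ^^ j) (taylor_poly F z m)) z = poly ((pderiv ^^ j) ?P) 0"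
    unfolding taylor_poly_def pderiv_funpow_pcompose_lin by (simp add: poly_pcompose)
  also have "\<dots> = coeff ((pderiv ^^ j) ?P) 0" by (simp add: poly_0_coeff_0)
  also have "\<dots> = of_nat (fact j) * coeff ?P j"
    using coeff_pderiv_funpow[of 0 j ?P] by simp
  also have "coeff ?P j = F j / of_nat (fact j)"
    using assms by (simp add: coeff_sum coeff_monom)
  finally show ?thesis by simp
qed

lemma coprime_lin:
  assumes "z \<noteq> (a::complex)"
  shows "coprime [:-z, 1:] [:-a, 1:]"
proof (rule coprimeI)
  fix c assume c1: "c dvd [:-z, 1:]" and c2: "c dvd [:-a, 1:]"
  then have "c dvd [:-z, 1:] - [:-a, 1:]" by (rule dvd_diff)
  moreover have "[:-z, 1:] - [:-a, 1:] = [:a - z:]" by simp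
  moreover have "is_unit [:a - z:]" using assms by (simp add: is_unit_const_poly_iff)
  ultimately show "is_unit c" using dvd_unit_imp_unit by metis
qed

lemma interp_exists:
  fixes Z :: "complex set"
  assumes "finite Z"
  shows "\<exists>p. \<forall>z\<in>Z. \<forall>j<m z. poly ((pderiv ^^ j) p) z = F z j"
  using assms
proof (induct Z rule: finite_induct)
  case empty then show ?case by simp
next
  case (insert a Z)
  obtain p where p: "\<forall>z\<in>Z. \<forall>j<m z. poly ((pderiv ^^ j) p) z = F z j" using insert by blast
  define Q where "Q = (\<Prod>z\<in>Z. [:-z, 1:] ^ m z)"
  define R where "R = [:-a, 1:] ^ m a"
  define T where "T = taylor_poly (F a) a (m a)"
  have cop: "coprime Q R" unfolding Q_def R_def
    by (rule prod_coprime_left) (use insert.hyps coprime_lin in \<open>metis coprime_power_left_iff coprime_power_right_iff\<close>)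
  obtain u v where uv: "u * Q + v * R = 1"
    using bezout_coefficients_fst_snd[of Q R] cop by (metis coprime_iff_gcd_eq_1)
  define p' where "p' = p + Q * (u * (T - p))"
  show ?case
  proof (intro exI ballI allI impI)
    fix z j assume z: "z \<in> insert a Z" and j: "j < m z"
    show "poly ((pderiv ^^ j) p') z = F z j"
    proof (cases "z = a")
      case True
      have "p' - T = (p - T) * (1 - u * Q)" unfolding p'_def by (simp add: algebra_simps)
      also have "1 - u * Q = v * R" using uv by (simp add: algebra_simps)
      finally have "R dvd p' - T" by simp
      then have "poly ((pderiv ^^ j) (p' - T)) a = 0"
        using dvd_imp_vanish j True unfolding R_def by blast
      then show ?thesis using taylor_poly_deriv[of j "m a" "F a" a] j True
        unfolding pderiv_funpow_diff T_def by simp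
    next
      case False
      then have zZ: "z \<in> Z" using z by simp
      have "[:-z, 1:] ^ m z dvd Q" unfolding Q_def using zZ insert.hyps by auto
      then have "[:-z, 1:] ^ m z dvd Q * (u * (T - p))" by simp
      then have "poly ((pderiv ^^ j) (Q * (u * (T - p)))) z = 0" using dvd_imp_vanish j by blast
      then show ?thesis using p zZ j unfolding p'_def pderiv_funpow_add by simp
    qed
  qed
qed

lemma order_le_imp_dvd_lin:
  fixes r :: "complex poly"
  assumes "\<forall>z. Polynomial.order z (\<Prod>a\<leftarrow>as. [:-a, 1:]) \<le> Polynomial.order z r"
  shows "(\<Prod>a\<leftarrow>as. [:-a, 1:]) dvd r"
  using assms
proof (induct as arbitrary: r)
  case Nil then show ?case by simp
next
  case (Cons a as)
  show ?case
  proof (cases "r = 0")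
    case True then show ?thesis by simp
  next
    case False
    let ?P = "\<Prod>a\<leftarrow>as. [:-a, 1:]"
    have P0: "?P \<noteq> 0" by (auto simp: prod_list_zero_iff)
    have lin0: "[:-a, 1:] \<noteq> 0" by simp
    have "Polynomial.order a ([:-a, 1:] * ?P) = Polynomial.order a [:-a, 1:] + Polynomial.order a ?P"
      using P0 lin0 by (intro order_mult) (metis mult_eq_0_iff)
    then have "1 \<le> Polynomial.order a ([:-a, 1:] * ?P)" by (simp add: order_power_n_n[of _ 1, simplified])
    then have "1 \<le> Polynomial.order a r" using Cons.prems[rule_format, of a] by simp
    then have "[:-a, 1:] ^ 1 dvd r" using order_divides by blast
    then obtain r' where r': "r = [:-a, 1:] * r'" by (auto elim: dvdE)
    have r'0: "r' \<noteq> 0" using False r' by auto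
    have "\<forall>z. Polynomial.order z ?P \<le> Polynomial.order z r'"
    proof
      fix z
      have "Polynomial.order z ([:-a, 1:] * ?P) \<le> Polynomial.order z r" using Cons.prems by simp
      moreover have "Polynomial.order z ([:-a, 1:] * ?P) = Polynomial.order z [:-a, 1:] + Polynomial.order z ?P"
        using P0 lin0 by (intro order_mult) (metis mult_eq_0_iff)
      moreover have "Polynomial.order z r = Polynomial.order z [:-a, 1:] + Polynomial.order z r'"
        unfolding r' using lin0 r'0 by (intro order_mult) (metis mult_eq_0_iff)
      ultimately show "Polynomial.order z ?P \<le> Polynomial.order z r'" by simp
    qed
    from Cons.hyps[OF this] have "?P dvd r'" .
    then have "[:-a, 1:] * ?P dvd [:-a, 1:] * r'" by (rule mult_dvd_mono[OF dvd_refl])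
    then show ?thesis unfolding r' by (simp only: prod_list.Cons list.map)
  qed
qed

definition interp :: "complex poly \<Rightarrow> (complex \<Rightarrow> complex) \<Rightarrow> complex mat \<Rightarrow> bool" where
  "interp p f A = (\<forall>z. poly (char_poly A) z = 0 \<longrightarrow>
        (\<forall>j < Polynomial.order z (char_poly A). (deriv ^^ j) (poly p) z = (deriv ^^ j) f z))"

lemma interp_unique:
  assumes A: "A \<in> carrier_mat n n" and p: "interp p f A" and q: "interp q f A"
  shows "mat_poly p A = mat_poly q A"
proof -
  let ?P = "char_poly A"
  define r where "r = p - q"
  have van: "poly ((pderiv ^^ j) r) z = 0" if "j < Polynomial.order z ?P" for z j
  proof -
    have root: "poly ?P z = 0"
      using that by (metis order_0I not_less0)
    have "(deriv ^^ j) (poly p) z = (deriv ^^ j) (poly q) z"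
      using p q root that unfolding interp_def by simp
    then show ?thesis unfolding r_def pderiv_funpow_diff higher_deriv_poly by simp
  qed
  obtain as where as: "?P = (\<Prod>a\<leftarrow>as. [:- a, 1:])" using char_poly_factorized[OF A] by blast
  have dvd: "?P dvd r"
  proof (cases "r = 0")
    case True then show ?thesis by simp
  next
    case False
    have "\<forall>z. Polynomial.order z ?P \<le> Polynomial.order z r"
      using vanish_imp_order[OF False] van by blast
    then show ?thesis unfolding as by (rule order_le_imp_dvd_lin)
  qed
  then obtain h where h: "r = ?P * h" by (auto elim: dvdE)
  have "mat_poly r A = mat_poly ?P A * mat_poly h A" unfolding h by (rule mat_poly_mult[OF A])
  also have "\<dots> = 0\<^sub>m n n" using cayley_hamilton[OF A] A by simp
  finally have r0: "mat_poly r A = 0\<^sub>m n n" .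
  have "mat_poly p A = mat_poly (q + r) A" unfolding r_def by simp
  also have "\<dots> = mat_poly q A + 0\<^sub>m n n" unfolding mat_poly_add[OF A] r0 ..
  also have "\<dots> = mat_poly q A" using A by simp
  finally show ?thesis .
qed

lemma mat_fun_eq:
  assumes A: "A \<in> carrier_mat n n" and p: "interp p f A"
  shows "mat_fun f A = mat_poly p A"
  unfolding mat_fun_def
proof (rule the_equality)
  show "\<exists>q. (\<forall>z. poly (char_poly A) z = 0 \<longrightarrow>
        (\<forall>j < Polynomial.order z (char_poly A). (deriv ^^ j) (poly q) z = (deriv ^^ j) f z))
      \<and> mat_poly p A = mat_poly q A"
    using p unfolding interp_def by blast
next
  fix B assume "\<exists>q. (\<forall>z. poly (char_poly A) z = 0 \<longrightarrow>
        (\<forall>j < Polynomial.order z (char_poly A). (deriv ^^ j) (poly q) z = (deriv ^^ j) f z))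
      \<and> B = mat_poly q A"
  then obtain q where q: "interp q f A" and B: "B = mat_poly q A" unfolding interp_def by blast
  show "B = mat_poly p A" unfolding B by (rule interp_unique[OF A q p])
qed

lemma divdiff_holo:
  assumes "h holomorphic_on S" "open S"
  shows "(\<lambda>t. divdiff h t l) holomorphic_on S"
proof -
  have "(\<lambda>t. divdiff h t l) = (\<lambda>t. if t = l then deriv h l else (h t - h l) / (t - l))"
    by (rule ext) (simp add: divdiff_def)
  then show ?thesis using pole_lemma_open[OF assms] by simp
qed

lemma higher_deriv_lin: "(deriv ^^ i) (\<lambda>t. t - l) t = (if i = 0 then t - l else if i = 1 then 1 else (0::complex))"
proof -
  have e: "(\<lambda>t. t - l) = poly [:-l, 1:]" by (rule ext) simp
  have "poly ((pderiv ^^ i) [:-l, 1:]) t = (if i = 0 then t - l else if i = 1 then 1 else (0::complex))"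
  proof (cases i)
    case 0 then show ?thesis by simp
  next
    case (Suc k)
    show ?thesis
    proof (cases k)
      case 0 then show ?thesis using Suc by (simp add: pderiv_pCons)
    next
      case (Suc k')
      have "(pderiv ^^ i) [:-l, 1:] = (pderiv ^^ k') (pderiv (pderiv [:-l, 1:]))"
        using Suc \<open>i = Suc k\<close> by (simp only: funpow_Suc_right o_apply)
      also have "\<dots> = 0" by (simp add: pderiv_pCons)
      finally show ?thesis using Suc \<open>i = Suc k\<close> by simp
    qed
  qed
  then show ?thesis unfolding e higher_deriv_poly .
qed

lemma divdiff_higher:
  assumes hol: "h holomorphic_on S" and S: "open S" and hl: "h l = 0" and t: "t \<in> S"
  shows "(deriv ^^ Suc n) h t = (t - l) * (deriv ^^ Suc n) (\<lambda>t. divdiff h t l) t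
           + of_nat (Suc n) * (deriv ^^ n) (\<lambda>t. divdiff h t l) t"
proof -
  let ?g = "\<lambda>t. divdiff h t l"
  have hg: "h = (\<lambda>t. (t - l) * ?g t)"
    by (rule ext) (auto simp: divdiff_def hl)
  have "(deriv ^^ Suc n) (\<lambda>t. (t - l) * ?g t) t =
     (\<Sum>i = 0..Suc n. of_nat (Suc n choose i) * (deriv ^^ i) (\<lambda>t. t - l) t * (deriv ^^ (Suc n - i)) ?g t)"
    by (rule higher_deriv_mult[OF _ divdiff_holo[OF hol S] S t]) (intro holomorphic_intros)
  also have "\<dots> = (\<Sum>i \<in> {0, 1}. of_nat (Suc n choose i) * (deriv ^^ i) (\<lambda>t. t - l) t * (deriv ^^ (Suc n - i)) ?g t)"
    by (rule sum.mono_neutral_right) (auto simp: higher_deriv_lin)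
  also have "\<dots> = (t - l) * (deriv ^^ Suc n) ?g t + of_nat (Suc n) * (deriv ^^ n) ?g t"
    by (simp add: higher_deriv_lin)
  finally show ?thesis using hg by simp
qed

lemma divdiff_vanish_same:
  assumes hol: "h holomorphic_on S" and S: "open S" and l: "l \<in> S" and hl: "h l = 0"
    and van: "\<forall>j\<le>m. (deriv ^^ j) h l = 0" and n: "n < m"
  shows "(deriv ^^ n) (\<lambda>t. divdiff h t l) l = 0"
proof -
  have a: "(deriv ^^ Suc n) h l = 0" using van n Suc_leI by blast
  have b: "(deriv ^^ Suc n) h l = of_nat (Suc n) * (deriv ^^ n) (\<lambda>t. divdiff h t l) l"
    using divdiff_higher[OF hol S hl l, of n] by simp
  from a b have "of_nat (Suc n) * (deriv ^^ n) (\<lambda>t. divdiff h t l) l = 0" by metis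
  then show ?thesis by (simp del: of_nat_Suc)
qed

lemma divdiff_vanish_other:
  assumes hol: "h holomorphic_on S" and S: "open S" and z: "z \<in> S" and hl: "h l = 0" and zl: "z \<noteq> l"
    and van: "\<forall>j<m. (deriv ^^ j) h z = 0"
  shows "n < m \<Longrightarrow> (deriv ^^ n) (\<lambda>t. divdiff h t l) z = 0"
proof (induct n)
  case 0
  have "h z = (z - l) * divdiff h z l" using zl hl by (simp add: divdiff_def)
  moreover have "h z = 0" using van 0 by (metis funpow_0)
  ultimately show ?case using zl by simp
next
  case (Suc n)
  have "(deriv ^^ Suc n) h z = 0" using van Suc.prems by blast
  then show ?case using divdiff_higher[OF hol S hl z, of n] Suc zl by simp
qed

lemma divdiff_interp:
  fixes f :: "complex \<Rightarrow> complex"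
  assumes hol: "f holomorphic_on S" and S: "open S" and l: "l \<in> S" and z: "z \<in> S"
    and fl: "poly p l = f l"
    and agree: "\<forall>j. (j < m \<or> (z = l \<and> j = m)) \<longrightarrow> (deriv ^^ j) (poly p) z = (deriv ^^ j) f z"
    and n: "n < m"
  shows "(deriv ^^ n) (\<lambda>t. divdiff (poly p) t l) z = (deriv ^^ n) (\<lambda>t. divdiff f t l) z"
proof -
  define h where "h = (\<lambda>t. f t - poly p t)"
  have holp: "poly p holomorphic_on S" by (intro holomorphic_intros)
  have holh: "h holomorphic_on S" unfolding h_def by (intro holomorphic_intros hol)
  have hl: "h l = 0" unfolding h_def using fl by simp
  have hj: "(deriv ^^ j) h z = (deriv ^^ j) f z - (deriv ^^ j) (poly p) z" for j
    unfolding h_def by (rule higher_deriv_diff[OF hol holp S z])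
  have dd: "divdiff h t l = divdiff f t l - divdiff (poly p) t l" for t
  proof (cases "t = l")
    case True
    have "f field_differentiable at l" using hol S l holomorphic_on_imp_differentiable_at by blast
    moreover have "poly p field_differentiable at l" unfolding field_differentiable_def using poly_DERIV by blast
    ultimately show ?thesis using True unfolding h_def divdiff_def
      by (simp add: deriv_diff)
  next
    case False
    then show ?thesis unfolding h_def divdiff_def by (simp add: diff_divide_distrib)
  qed
  have "(deriv ^^ n) (\<lambda>t. divdiff h t l) z =
      (deriv ^^ n) (\<lambda>t. divdiff f t l) z - (deriv ^^ n) (\<lambda>t. divdiff (poly p) t l) z"
    unfolding dd by (rule higher_deriv_diff[OF divdiff_holo[OF hol S] divdiff_holo[OF holp S] S z])
  moreover have "(deriv ^^ n) (\<lambda>t. divdiff h t l) z = 0"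
  proof (cases "z = l")
    case True
    have "\<forall>j\<le>m. (deriv ^^ j) h l = 0" using agree True hj by (auto simp: le_less)
    then show ?thesis using divdiff_vanish_same[OF holh S l hl _ n] True by simp
  next
    case False
    have "\<forall>j<m. (deriv ^^ j) h z = 0" using agree hj by auto
    then show ?thesis using divdiff_vanish_other[OF holh S z hl False] n by simp
  qed
  ultimately show ?thesis by simp
qed

lemma mv_index:
  assumes B: "B \<in> carrier_mat n n" and x: "x \<in> carrier_vec n" and i: "i < n"
  shows "(B *\<^sub>v x) $ i = (\<Sum>j<n. B $$ (i,j) * x $ j)"
  using B x i by (simp add: scalar_prod_def lessThan_atLeast0)

lemma pc_vec:
  assumes B: "B \<in> carrier_mat n n" and x: "x \<in> carrier_vec n" and i: "i < n"
  shows "(mat_poly (pCons a q) B *\<^sub>v x) $ i = a * x $ i + (\<Sum>j<n. B $$ (i,j) * (mat_poly q B *\<^sub>v x) $ j)"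
proof -
  have Q: "mat_poly q B \<in> carrier_mat n n" using B by simp
  have "mat_poly (pCons a q) B *\<^sub>v x = (a \<cdot>\<^sub>m 1\<^sub>m n) *\<^sub>v x + B *\<^sub>v (mat_poly q B *\<^sub>v x)"
    unfolding mat_poly_pCons[OF B] using B Q x
    by (simp add: add_mult_distrib_mat_vec[of _ n n] assoc_mult_mat_vec[of B n n "mat_poly q B" n x])
  also have "\<dots> $ i = ((a \<cdot>\<^sub>m 1\<^sub>m n) *\<^sub>v x) $ i + (B *\<^sub>v (mat_poly q B *\<^sub>v x)) $ i"
    using B i by simp
  also have "((a \<cdot>\<^sub>m 1\<^sub>m n) *\<^sub>v x) $ i = a * x $ i"
  proof -
    have "((a \<cdot>\<^sub>m 1\<^sub>m n) *\<^sub>v x) $ i = (\<Sum>j<n. (if i = j then a else 0) * x $ j)"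
      by (subst mv_index[of _ n]) (use x i in \<open>auto intro!: sum.cong\<close>)
    also have "\<dots> = (\<Sum>j<n. if j = i then a * x $ i else 0)" by (rule sum.cong) auto
    also have "\<dots> = a * x $ i" using i by simp
    finally show ?thesis .
  qed
  also have "(B *\<^sub>v (mat_poly q B *\<^sub>v x)) $ i = (\<Sum>j<n. B $$ (i,j) * (mat_poly q B *\<^sub>v x) $ j)"
    by (rule mv_index[OF B _ i]) (use Q x in auto)
  finally show ?thesis .
qed

lemma last_entry:
  fixes d :: nat and M X Xinv :: "complex mat" and w :: "complex vec" and lam :: "nat \<Rightarrow> complex"
  assumes d: "d > 0"
    and A: "A \<in> carrier_mat d d"
    and X: "X \<in> carrier_mat d d" and Xinv: "Xinv \<in> carrier_mat d d"
    and inv1: "X * Xinv = 1\<^sub>m d" and inv2: "Xinv * X = 1\<^sub>m d"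
    and eig: "A = X * mat d d (\<lambda>(i, j). if i = j then lam i else 0) * Xinv"
  shows "(mat_poly q A *\<^sub>v unit_vec d 0) $ (d - 1) = (\<Sum>i<d. X $$ (d-1,i) * Xinv $$ (i,0) * poly q (lam i))"
proof -
  let ?D = "mat d d (\<lambda>(i, j). if i = j then lam i else 0)"
  have D: "?D \<in> carrier_mat d d" by simp
  have AX: "A * X = X * ?D"
  proof -
    have "A * X = (X * ?D) * (Xinv * X)" unfolding eig
      by (rule assoc_mult_mat[of "X * ?D" d d Xinv d X d]) (use X Xinv D in auto)
    also have "\<dots> = X * ?D" using X D by (simp add: inv2)
    finally show ?thesis .
  qed
  have QD: "mat_poly q ?D \<in> carrier_mat d d" using D by simp
  have QA: "mat_poly q A \<in> carrier_mat d d" using A by simp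
  have "mat_poly q A = mat_poly q A * (X * Xinv)" using A QA by (simp add: inv1)
  also have "\<dots> = (mat_poly q A * X) * Xinv"
    by (rule assoc_mult_mat[symmetric, of _ d d _ d _ d]) (use QA X Xinv in auto)
  also have "\<dots> = X * mat_poly q ?D * Xinv" by (simp add: mat_poly_intertwine[OF A D X AX])
  finally have eq: "mat_poly q A = X * mat_poly q ?D * Xinv" .
  have "mat_poly q A *\<^sub>v unit_vec d 0 = X *\<^sub>v (mat_poly q ?D *\<^sub>v (Xinv *\<^sub>v unit_vec d 0))"
    unfolding eq using X Xinv QD
    by (simp add: assoc_mult_mat_vec[of "X * mat_poly q ?D" d d Xinv d "unit_vec d 0"]
                  assoc_mult_mat_vec[of X d d "mat_poly q ?D" d "Xinv *\<^sub>v unit_vec d 0"])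
  also have "\<dots> $ (d-1) = (\<Sum>k<d. X $$ (d-1,k) * (mat_poly q ?D *\<^sub>v (Xinv *\<^sub>v unit_vec d 0)) $ k)"
    by (rule mv_index[OF X]) (use d QD Xinv in \<open>auto intro!: mult_mat_vec_carrier[of _ d d]\<close>)
  also have "\<dots> = (\<Sum>k<d. X $$ (d-1,k) * Xinv $$ (k,0) * poly q (lam k))"
  proof (rule sum.cong[OF refl])
    fix k assume k: "k \<in> {..<d}"
    have xe: "(Xinv *\<^sub>v unit_vec d 0) $ j = Xinv $$ (j, 0)" if "j < d" for j
    proof -
      have "(Xinv *\<^sub>v unit_vec d 0) $ j = (\<Sum>i = 0..<d. Xinv $$ (j, i) * (if i = 0 then 1 else 0))"
        using Xinv that d by (simp add: scalar_prod_def)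
      also have "\<dots> = (\<Sum>i \<in> {0..<d}. if i = 0 then Xinv $$ (j, i) else 0)" by (rule sum.cong) auto
      also have "\<dots> = Xinv $$ (j, 0)" using d by simp
      finally show ?thesis .
    qed
    have "(mat_poly q ?D *\<^sub>v (Xinv *\<^sub>v unit_vec d 0)) $ k = (\<Sum>j<d. mat_poly q ?D $$ (k,j) * (Xinv *\<^sub>v unit_vec d 0) $ j)"
      by (rule mv_index[OF QD]) (use Xinv k in auto)
    also have "\<dots> = (\<Sum>j<d. if j = k then poly q (lam k) * Xinv $$ (k, 0) else 0)"
      by (rule sum.cong[OF refl]) (use k xe in \<open>auto simp: mat_poly_diag\<close>)
    also have "\<dots> = poly q (lam k) * Xinv $$ (k, 0)" using k by simp
    finally show "X $$ (d-1,k) * (mat_poly q ?D *\<^sub>v (Xinv *\<^sub>v unit_vec d 0)) $ k = X $$ (d-1,k) * Xinv $$ (k,0) * poly q (lam k)"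
      by simp
  qed
  finally show ?thesis .
qed

lemma poly_identity:
  fixes d :: nat and M X Xinv :: "complex mat" and w :: "complex vec" and lam :: "nat \<Rightarrow> complex"
  assumes d: "d > 0"
    and M: "M \<in> carrier_mat d d" and w: "w \<in> carrier_vec d"
    and X: "X \<in> carrier_mat d d" and Xinv: "Xinv \<in> carrier_mat d d"
    and inv1: "X * Xinv = 1\<^sub>m d" and inv2: "Xinv * X = 1\<^sub>m d"
    and eig: "M + rank1_last d w = X * mat d d (\<lambda>(i, j). if i = j then lam i else 0) * Xinv"
  shows "r < d \<Longrightarrow> (mat_poly p (M + rank1_last d w) *\<^sub>v unit_vec d 0) $ r - (mat_poly p M *\<^sub>v unit_vec d 0) $ r
     = (\<Sum>i<d. X $$ (d-1,i) * Xinv $$ (i,0) * (mat_poly (synthetic_div p (lam i)) M *\<^sub>v w) $ r)"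
proof (induct p arbitrary: r)
  case 0
  have A: "M + rank1_last d w \<in> carrier_mat d d" using M by (simp add: rank1_last_def)
  show ?case using 0 A M w by simp
next
  case (pCons a q r)
  let ?A = "M + rank1_last d w"
  let ?e = "unit_vec d 0"
  let ?c = "\<lambda>i. X $$ (d-1,i) * Xinv $$ (i,0)"
  let ?S = "\<lambda>i. mat_poly (synthetic_div q (lam i)) M *\<^sub>v w"
  define u where "u = mat_poly q ?A *\<^sub>v ?e"
  define v where "v = mat_poly q M *\<^sub>v ?e"
  have A: "?A \<in> carrier_mat d d" using M by (simp add: rank1_last_def)
  have e: "?e \<in> carrier_vec d" by simp
  have r: "r < d" by fact
  have Aent: "?A $$ (r,j) = M $$ (r,j) + w $ r * (if j = d - 1 then 1 else 0)" if "j < d" for j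
    using M that r by (simp add: rank1_last_def)
  have ud: "u $ (d-1) = (\<Sum>i<d. ?c i * poly q (lam i))"
    unfolding u_def by (rule last_entry[OF d A X Xinv inv1 inv2 eig])
  have "(\<Sum>j<d. ?A $$ (r,j) * u $ j) = (\<Sum>j<d. M $$ (r,j) * u $ j + w $ r * (if j = d - 1 then u $ j else 0))"
    by (rule sum.cong) (auto simp: Aent algebra_simps)
  also have "\<dots> = (\<Sum>j<d. M $$ (r,j) * u $ j) + w $ r * u $ (d-1)"
    using d by (simp add: sum.distrib if_distrib[where f="\<lambda>x. w $ r * x"] cong: if_cong)
  finally have sA: "(\<Sum>j<d. ?A $$ (r,j) * u $ j) = (\<Sum>j<d. M $$ (r,j) * u $ j) + w $ r * u $ (d-1)" .
  have "(mat_poly (pCons a q) ?A *\<^sub>v ?e) $ r - (mat_poly (pCons a q) M *\<^sub>v ?e) $ r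
      = (\<Sum>j<d. ?A $$ (r,j) * u $ j) - (\<Sum>j<d. M $$ (r,j) * v $ j)"
    unfolding u_def v_def pc_vec[OF A e r] pc_vec[OF M e r] by simp
  also have "\<dots> = (\<Sum>j<d. M $$ (r,j) * (u $ j - v $ j)) + w $ r * u $ (d-1)"
    unfolding sA by (simp add: algebra_simps sum_subtractf)
  also have "(\<Sum>j<d. M $$ (r,j) * (u $ j - v $ j)) = (\<Sum>j<d. M $$ (r,j) * (\<Sum>i<d. ?c i * ?S i $ j))"
    by (rule sum.cong[OF refl]) (use pCons.hyps in \<open>auto simp: u_def v_def\<close>)
  also have "\<dots> = (\<Sum>i<d. ?c i * (\<Sum>j<d. M $$ (r,j) * ?S i $ j))"
    by (simp add: sum_distrib_left algebra_simps) (rule sum.swap)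
  finally have L: "(mat_poly (pCons a q) ?A *\<^sub>v ?e) $ r - (mat_poly (pCons a q) M *\<^sub>v ?e) $ r
     = (\<Sum>i<d. ?c i * (\<Sum>j<d. M $$ (r,j) * ?S i $ j)) + w $ r * (\<Sum>i<d. ?c i * poly q (lam i))"
    unfolding ud .
  have "(\<Sum>i<d. ?c i * (mat_poly (synthetic_div (pCons a q) (lam i)) M *\<^sub>v w) $ r)
      = (\<Sum>i<d. ?c i * (poly q (lam i) * w $ r + (\<Sum>j<d. M $$ (r,j) * ?S i $ j)))"
    by (rule sum.cong[OF refl]) (simp add: pc_vec[OF M w r])
  also have "\<dots> = (\<Sum>i<d. ?c i * (\<Sum>j<d. M $$ (r,j) * ?S i $ j)) + w $ r * (\<Sum>i<d. ?c i * poly q (lam i))"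
    by (simp add: algebra_simps sum.distrib sum_distrib_left)
  finally show ?case using L by simp
qed

lemma poly_synthetic_div_divdiff:
  "poly (synthetic_div p c) = (\<lambda>t. divdiff (poly p) t c)"
proof (rule ext)
  fix t
  let ?q = "synthetic_div p c"
  have pq: "p = [:-c, 1:] * ?q + [:poly p c:]" using synthetic_div_correct'[of c p] by simp
  show "poly ?q t = divdiff (poly p) t c"
  proof (cases "t = c")
    case True
    have "pderiv p = pderiv ([:-c, 1:] * ?q)" by (subst pq) (simp add: pderiv_add pderiv_pCons)
    also have "\<dots> = [:-c, 1:] * pderiv ?q + ?q * pderiv [:-c, 1:]" by (rule pderiv_mult)
    finally have "poly (pderiv p) c = poly ?q c" by (simp add: pderiv_pCons)
    then show ?thesis using True by (simp add: divdiff_def deriv_poly_eq)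
  next
    case False
    have "poly p t = (t - c) * poly ?q t + poly p c"
      using arg_cong[OF pq, of "\<lambda>x. poly x t"] by (simp add: algebra_simps)
    then show ?thesis using False by (simp add: divdiff_def field_simps)
  qed
qed

lemma eig_roots:
  fixes A X Xinv :: "complex mat"
  assumes A: "A \<in> carrier_mat d d"
    and X: "X \<in> carrier_mat d d" and Xinv: "Xinv \<in> carrier_mat d d"
    and inv1: "X * Xinv = 1\<^sub>m d" and inv2: "Xinv * X = 1\<^sub>m d"
    and eig: "A = X * mat d d (\<lambda>(i, j). if i = j then lam i else 0) * Xinv"
    and i: "i < d"
  shows "poly (char_poly A) (lam i) = 0"
proof -
  let ?D = "mat d d (\<lambda>(i, j). if i = j then lam i else 0)"
  have D: "?D \<in> carrier_mat d d" by simp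
  have ut: "upper_triangular ?D" unfolding upper_triangular_def by auto
  have "similar_mat A ?D" by (rule similar_matI[of _ _ X Xinv d]) (use A X Xinv D inv1 inv2 eig in auto)
  then have "char_poly A = char_poly ?D" by (rule char_poly_similar)
  also have "\<dots> = (\<Prod>a\<leftarrow>diag_mat ?D. [:- a, 1:])" by (rule char_poly_upper_triangular[OF D ut])
  finally have cp: "char_poly A = (\<Prod>a\<leftarrow>diag_mat ?D. [:- a, 1:])" .
  have mem: "lam i \<in> set (diag_mat ?D)" using i unfolding diag_mat_def by auto
  show ?thesis unfolding cp poly_prod_list using mem
    by (auto simp: prod_list_zero_iff)
qed

theorem theorem1:
  fixes d :: nat and M X Xinv :: "complex mat" and w :: "complex vec"
    and lam :: "nat \<Rightarrow> complex" and f :: "complex \<Rightarrow> complex" and S :: "complex set"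
  assumes d: "d > 0"
    and M: "M \<in> carrier_mat d d" and w: "w \<in> carrier_vec d"
    and X: "X \<in> carrier_mat d d" and Xinv: "Xinv \<in> carrier_mat d d"
    and inv1: "X * Xinv = 1\<^sub>m d" and inv2: "Xinv * X = 1\<^sub>m d"
    and eig: "M + rank1_last d w = X * mat d d (\<lambda>(i, j). if i = j then lam i else 0) * Xinv"
    and S: "open S" and hol: "f holomorphic_on S"
    and eigM: "\<And>z. eigenvalue M z \<Longrightarrow> z \<in> S"
    and eigMw: "\<And>z. eigenvalue (M + rank1_last d w) z \<Longrightarrow> z \<in> S"
  shows "mat_fun f (M + rank1_last d w) *\<^sub>v unit_vec d 0 - mat_fun f M *\<^sub>v unit_vec d 0
         = g_w_mat f d X Xinv lam M *\<^sub>v w"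
proof -
  define A where "A = M + rank1_last d w"
  have A: "A \<in> carrier_mat d d" unfolding A_def using M by (simp add: rank1_last_def)
  define PA where "PA = char_poly A"
  define PM where "PM = char_poly M"
  have PA0: "PA \<noteq> 0" unfolding PA_def using degree_monic_char_poly[OF A] by auto
  have PM0: "PM \<noteq> 0" unfolding PM_def using degree_monic_char_poly[OF M] by auto
  define Z where "Z = {z. poly PA z = 0} \<union> {z. poly PM z = 0}"
  have finZ: "finite Z" unfolding Z_def using poly_roots_finite PA0 PM0 by auto
  define m where "m = (\<lambda>z. Polynomial.order z PA + Polynomial.order z PM + 1)"
  obtain p where p: "\<forall>z\<in>Z. \<forall>j<m z. poly ((pderiv ^^ j) p) z = (deriv ^^ j) f z"
    using interp_exists[OF finZ, of m "\<lambda>z j. (deriv ^^ j) f z"] by blast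
  have pZ: "(deriv ^^ j) (poly p) z = (deriv ^^ j) f z" if "z \<in> Z" "j < m z" for z j
    using p that unfolding higher_deriv_poly by blast
  have ZS: "z \<in> S" if "z \<in> Z" for z
  proof -
    have "poly PA z = 0 \<or> poly PM z = 0" using that unfolding Z_def by auto
    then show ?thesis
    proof
      assume "poly PA z = 0"
      then have "eigenvalue A z" unfolding PA_def using eigenvalue_root_char_poly[OF A] by blast
      then show ?thesis using eigMw unfolding A_def by blast
    next
      assume "poly PM z = 0"
      then have "eigenvalue M z" unfolding PM_def using eigenvalue_root_char_poly[OF M] by blast
      then show ?thesis using eigM by blast
    qed
  qed
  have fA: "mat_fun f A = mat_poly p A"
  proof (rule mat_fun_eq[OF A])
    show "interp p f A" unfolding interp_def
    proof (intro allI impI)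
      fix z j assume "poly (char_poly A) z = 0" "j < Polynomial.order z (char_poly A)"
      then show "(deriv ^^ j) (poly p) z = (deriv ^^ j) f z"
        by (intro pZ) (auto simp: Z_def m_def PA_def)
    qed
  qed
  have fM: "mat_fun f M = mat_poly p M"
  proof (rule mat_fun_eq[OF M])
    show "interp p f M" unfolding interp_def
    proof (intro allI impI)
      fix z j assume "poly (char_poly M) z = 0" "j < Polynomial.order z (char_poly M)"
      then show "(deriv ^^ j) (poly p) z = (deriv ^^ j) f z"
        by (intro pZ) (auto simp: Z_def m_def PM_def)
    qed
  qed
  have lamZ: "lam i \<in> Z" if "i < d" for i
    using eig_roots[OF A X Xinv inv1 inv2 eig[folded A_def] that] unfolding Z_def PA_def by auto
  have fD: "mat_fun (\<lambda>z. divdiff f z (lam i)) M = mat_poly (synthetic_div p (lam i)) M" if i: "i < d" for i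
  proof (rule mat_fun_eq[OF M])
    show "interp (synthetic_div p (lam i)) (\<lambda>z. divdiff f z (lam i)) M" unfolding interp_def
    proof (intro allI impI)
      fix z j assume z: "poly (char_poly M) z = 0" and j: "j < Polynomial.order z (char_poly M)"
      have zZ: "z \<in> Z" using z unfolding Z_def PM_def by auto
      have fl: "poly p (lam i) = f (lam i)" using pZ[OF lamZ[OF i], of 0] by (simp add: m_def)
      have agree: "\<forall>j. (j < Polynomial.order z (char_poly M) \<or> (z = lam i \<and> j = Polynomial.order z (char_poly M)))
            \<longrightarrow> (deriv ^^ j) (poly p) z = (deriv ^^ j) f z"
        using pZ[OF zZ] by (auto simp: m_def PM_def)
      show "(deriv ^^ j) (poly (synthetic_div p (lam i))) z = (deriv ^^ j) (\<lambda>z. divdiff f z (lam i)) z"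
        unfolding poly_synthetic_div_divdiff
        by (rule divdiff_interp[OF hol S ZS[OF lamZ[OF i]] ZS[OF zZ] fl agree j])
    qed
  qed
  show ?thesis
  proof (rule eq_vecI)
    fix r assume "r < dim_vec (g_w_mat f d X Xinv lam M *\<^sub>v w)"
    then have r: "r < d" by (simp add: g_w_mat_def)
    have G: "g_w_mat f d X Xinv lam M \<in> carrier_mat d d" by (simp add: g_w_mat_def)
    have "(mat_fun f A *\<^sub>v unit_vec d 0 - mat_fun f M *\<^sub>v unit_vec d 0) $ r
        = (mat_poly p A *\<^sub>v unit_vec d 0) $ r - (mat_poly p M *\<^sub>v unit_vec d 0) $ r"
      unfolding fA fM using r M by simp
    also have "\<dots> = (\<Sum>i<d. X $$ (d-1,i) * Xinv $$ (i,0) * (mat_poly (synthetic_div p (lam i)) M *\<^sub>v w) $ r)"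
      unfolding A_def by (rule poly_identity[OF d M w X Xinv inv1 inv2 eig r])
    also have "\<dots> = (\<Sum>i<d. X $$ (d-1,i) * Xinv $$ (i,0) * (\<Sum>c<d. mat_fun (\<lambda>z. divdiff f z (lam i)) M $$ (r,c) * w $ c))"
      by (rule sum.cong[OF refl]) (simp add: fD mv_index[OF mat_poly_carrier[OF M] w r])
    also have "\<dots> = (\<Sum>c<d. (\<Sum>i<d. X $$ (d-1,i) * Xinv $$ (i,0) * mat_fun (\<lambda>z. divdiff f z (lam i)) M $$ (r,c)) * w $ c)"
      by (simp add: sum_distrib_left sum_distrib_right algebra_simps) (rule sum.swap)
    also have "\<dots> = (g_w_mat f d X Xinv lam M *\<^sub>v w) $ r"
      by (subst mv_index[OF G w r]) (use r in \<open>auto simp: g_w_mat_def intro!: sum.cong\<close>)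
    finally show "(mat_fun f (M + rank1_last d w) *\<^sub>v unit_vec d 0 - mat_fun f M *\<^sub>v unit_vec d 0) $ r
        = (g_w_mat f d X Xinv lam M *\<^sub>v w) $ r" unfolding A_def .
  next
    show "dim_vec (mat_fun f (M + rank1_last d w) *\<^sub>v unit_vec d 0 - mat_fun f M *\<^sub>v unit_vec d 0)
        = dim_vec (g_w_mat f d X Xinv lam M *\<^sub>v w)"
      using fM M by (simp add: g_w_mat_def)
  qed
qed

end
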